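(* Let $X(\mathbb{R})$ be a separable Banach function space and let $K$ be a compact operator on $X(\mathbb{R})$. Then for every sequence $\{h_n\}_{n\in\mathbb{N}}\subset\mathbb{R}$ with $h_n\to+\infty$ or $h_n\to-\infty$, the operators $e_{h_n}Ke_{h_n}^{-1}I$ converge strongly to $0$ on $X(\mathbb{R})$, i.e. $\|e_{h_n}K(e_{h_n}^{-1}f)\|_{X(\mathbb{R})}\to0$ for every $f\in X(\mathbb{R})$, where $e_\lambda(x)=e^{i\lambda x}$.
   Context: A Banach function norm is a map $\rho$ from nonnegative measurable functions on $\mathbb{R}$ to $[0,\infty]$ that is a norm-like functional ($\rho(f)=0\iff f=0$ a.e., positive homogeneous, subadditive), has the lattice property ($0\le g\le f$ a.e. implies $\rho(g)\le\rho(f)$), the Fatou property ($0\le f_n\uparrow f$ a.e. implies $\rho(f_n)\uparrow\rho(f)$), satisfies $\rho(\chi_E)<\infty$ and $\int_E f\,dx\le C_E\rho(f)$ for every measurable $E$ with $|E|<\infty$. The Banach function space $X(\mathbb{R})$ is the set of measurable $f$ with $\|f\|_{X(\mathbb{R})}:=\rho(|f|)<\infty$. For a function $a$, $aI$ denotes the operator of multiplication by $a$. *)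

theory Defs
  imports "HOL-Analysis.Analysis"
begin

definition nonneg_meas :: "(real \<Rightarrow> real) set" where
  "nonneg_meas = {f. f \<in> borel_measurable lebesgue \<and> (\<forall>x. 0 \<le> f x)}"

definition banach_function_norm :: "((real \<Rightarrow> real) \<Rightarrow> ennreal) \<Rightarrow> bool" where
  "banach_function_norm \<rho> \<longleftrightarrow>
     (\<forall>f\<in>nonneg_meas. \<rho> f = 0 \<longleftrightarrow> (AE x in lebesgue. f x = 0)) \<and>
     (\<forall>f\<in>nonneg_meas. \<forall>c::real. 0 \<le> c \<longrightarrow> \<rho> (\<lambda>x. c * f x) = ennreal c * \<rho> f) \<and>
     (\<forall>f\<in>nonneg_meas. \<forall>g\<in>nonneg_meas. \<rho> (\<lambda>x. f x + g x) \<le> \<rho> f + \<rho> g) \<and>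
     (\<forall>f\<in>nonneg_meas. \<forall>g\<in>nonneg_meas.
        (AE x in lebesgue. g x \<le> f x) \<longrightarrow> \<rho> g \<le> \<rho> f) \<and>
     (\<forall>F f. (\<forall>n. F n \<in> nonneg_meas) \<longrightarrow> f \<in> nonneg_meas \<longrightarrow>
        (AE x in lebesgue. incseq (\<lambda>n. F n x) \<and> (\<lambda>n. F n x) \<longlonglongrightarrow> f x) \<longrightarrow>
        (SUP n. \<rho> (F n)) = \<rho> f) \<and>
     (\<forall>E \<in> sets lebesgue. emeasure lebesgue E < \<infinity> \<longrightarrow>
        \<rho> (indicator E) < \<infinity> \<and>
        (\<exists>C::real. \<forall>f\<in>nonneg_meas.
            (\<integral>\<^sup>+ x\<in>E. ennreal (f x) \<partial>lebesgue) \<le> ennreal C * \<rho> f))"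

definition bfs :: "((real \<Rightarrow> real) \<Rightarrow> ennreal) \<Rightarrow> (real \<Rightarrow> complex) set" where
  "bfs \<rho> = {f. f \<in> borel_measurable lebesgue \<and> \<rho> (\<lambda>x. cmod (f x)) < \<infinity>}"

definition bfs_norm :: "((real \<Rightarrow> real) \<Rightarrow> ennreal) \<Rightarrow> (real \<Rightarrow> complex) \<Rightarrow> real" where
  "bfs_norm \<rho> f = enn2real (\<rho> (\<lambda>x. cmod (f x)))"

definition bfs_separable :: "((real \<Rightarrow> real) \<Rightarrow> ennreal) \<Rightarrow> bool" where
  "bfs_separable \<rho> \<longleftrightarrow> (\<exists>D. countable D \<and> D \<subseteq> bfs \<rho> \<and>
     (\<forall>f\<in>bfs \<rho>. \<forall>\<epsilon>>0. \<exists>d\<in>D. bfs_norm \<rho> (\<lambda>x. f x - d x) < \<epsilon>))"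

definition bfs_compact_operator ::
  "((real \<Rightarrow> real) \<Rightarrow> ennreal) \<Rightarrow> ((real \<Rightarrow> complex) \<Rightarrow> (real \<Rightarrow> complex)) \<Rightarrow> bool" where
  "bfs_compact_operator \<rho> K \<longleftrightarrow>
     (\<forall>f\<in>bfs \<rho>. K f \<in> bfs \<rho>) \<and>
     (\<forall>f\<in>bfs \<rho>. \<forall>g\<in>bfs \<rho>. K (\<lambda>x. f x + g x) = (\<lambda>x. K f x + K g x)) \<and>
     (\<forall>f\<in>bfs \<rho>. \<forall>c::complex. K (\<lambda>x. c * f x) = (\<lambda>x. c * K f x)) \<and>
     (\<forall>u::nat \<Rightarrow> real \<Rightarrow> complex. (\<forall>n. u n \<in> bfs \<rho>) \<longrightarrow>
        (\<exists>B. \<forall>n. bfs_norm \<rho> (u n) \<le> B) \<longrightarrow>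
        (\<exists>r g. strict_mono r \<and> g \<in> bfs \<rho> \<and>
           (\<lambda>n. bfs_norm \<rho> (\<lambda>x. K (u (r n)) x - g x)) \<longlonglongrightarrow> 0))"

definition expo :: "real \<Rightarrow> real \<Rightarrow> complex" where
  "expo lam x = exp (\<i> * complex_of_real (lam * x))"

end

theory Submission
  imports Defs
begin

lemma expo_cnj: "expo c y * cnj (expo d y) = exp (\<i> * complex_of_real ((c - d) * y))"
  unfolding expo_def by (simp only: exp_cnj) (simp add: exp_add[symmetric] algebra_simps)

lemma sum_sq:
  fixes c :: "nat \<Rightarrow> real"
  shows "(cmod (\<Sum>a<N. expo (c a) y))^2 = (\<Sum>a<N. \<Sum>b<N. cos ((c a - c b) * y))"
proof -
  have "complex_of_real ((cmod (\<Sum>a<N. expo (c a) y))^2) = (\<Sum>a<N. expo (c a) y) * cnj (\<Sum>a<N. expo (c a) y)"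
    by (rule complex_norm_square)
  also have "\<dots> = (\<Sum>a<N. \<Sum>b<N. expo (c a) y * cnj (expo (c b) y))"
    by (simp add: cnj_sum sum_product)
  also have "\<dots> = (\<Sum>a<N. \<Sum>b<N. exp (\<i> * complex_of_real ((c a - c b) * y)))"
    by (simp add: expo_cnj)
  finally have "(cmod (\<Sum>a<N. expo (c a) y))^2 = Re (\<Sum>a<N. \<Sum>b<N. exp (\<i> * complex_of_real ((c a - c b) * y)))"
    by (metis Re_complex_of_real)
  also have "\<dots> = (\<Sum>a<N. \<Sum>b<N. cos ((c a - c b) * y))"
    by (simp add: Re_exp)
  finally show ?thesis .
qed

lemma cos_int:
  fixes s R :: real
  assumes "s \<noteq> 0" "0 \<le> R"
  shows "((\<lambda>y. cos (s * y)) has_integral (2 * sin (s * R) / s)) {-R..R}"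
proof -
  have "((\<lambda>y. cos (s * y)) has_integral (sin (s * R) / s - sin (s * (-R)) / s)) {-R..R}"
  proof (rule fundamental_theorem_of_calculus)
    show "-R \<le> R" using assms by simp
    fix x assume "x \<in> {-R..R}"
    have "((\<lambda>y. sin (s * y) / s) has_real_derivative (cos (s * x) * s / s)) (at x within {-R..R})"
      by (auto intro!: derivative_eq_intros)
    then show "((\<lambda>y. sin (s * y) / s) has_vector_derivative cos (s * x)) (at x within {-R..R})"
      using assms by (simp add: has_real_derivative_iff_has_vector_derivative)
  qed
  then show ?thesis by (simp add: field_simps)
qed

lemma cos_int0:
  fixes R :: real
  assumes "0 \<le> R"
  shows "((\<lambda>y. cos (0 * y)) has_integral (2 * R)) {-R..R}"
proof -
  have "((\<lambda>y. 1::real) has_integral (R - (-R))) {-R..R}"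
  proof (rule fundamental_theorem_of_calculus)
    show "-R \<le> R" using assms by simp
    fix x assume "x \<in> {-R..R}"
    show "((\<lambda>y. y) has_vector_derivative 1) (at x within {-R..R})"
      by (rule has_vector_derivative_id)
  qed
  then show ?thesis by simp
qed


lemma expo_meas[measurable]: "expo l \<in> borel_measurable borel"
  unfolding expo_def by measurable

lemma avg_measure:
  fixes c :: "nat \<Rightarrow> real" and R D t :: real
  assumes N: "N > 0" and R: "0 \<le> R" and D: "D > 0" and t: "t > 0"
    and sepc: "\<And>a b. a < N \<Longrightarrow> b < N \<Longrightarrow> a \<noteq> b \<Longrightarrow> D \<le> \<bar>c a - c b\<bar>"
  shows "emeasure lebesgue {x \<in> {-R..R}. t \<le> cmod ((\<Sum>a<N. expo (c a) x) / of_nat N)}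
           \<le> ennreal ((2*R/N + 2/D) / t^2)"
proof -
  define I where "I a b = (if c a = c b then 2*R else 2 * sin ((c a - c b) * R) / (c a - c b))" for a b
  have hI: "((\<lambda>y. cos ((c a - c b) * y)) has_integral I a b) {-R..R}" for a b
  proof (cases "c a = c b")
    case True then show ?thesis using cos_int0[OF R] by (simp add: I_def)
  next
    case False then show ?thesis using cos_int[OF _ R, of "c a - c b"] by (simp add: I_def)
  qed
  have hs: "((\<lambda>y. \<Sum>a<N. \<Sum>b<N. cos ((c a - c b) * y)) has_integral (\<Sum>a<N. \<Sum>b<N. I a b)) {-R..R}"
    by (intro has_integral_sum hI finite_lessThan)
  have Ib: "I a b \<le> (if a = b then 2*R else 0) + 2/D" if "a < N" "b < N" for a b
  proof (cases "a = b")
    case True then show ?thesis using D by (simp add: I_def)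
  next
    case False
    have d: "D \<le> \<bar>c a - c b\<bar>" using sepc that False by blast
    then have ne: "c a \<noteq> c b" using D by auto
    have "2 * sin ((c a - c b) * R) / (c a - c b) \<le> \<bar>2 * sin ((c a - c b) * R) / (c a - c b)\<bar>" by (rule abs_ge_self)
    also have "\<dots> = 2 * \<bar>sin ((c a - c b) * R)\<bar>/\<bar>c a - c b\<bar>" by (simp add: abs_mult abs_divide)
    also have "\<dots> \<le> 2*1/\<bar>c a - c b\<bar>"
      using ne by (intro divide_right_mono mult_left_mono) auto
    also have "\<dots> \<le> 2/D" using d D by (simp add: frac_le)
    finally show ?thesis using False ne by (simp add: I_def)
  qed
  have "(\<Sum>a<N. \<Sum>b<N. I a b) \<le> (\<Sum>a<N. \<Sum>b<N. (if a = b then 2*R else 0) + 2/D)"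
    using Ib by (intro sum_mono) auto
  also have "\<dots> = N * (2*R) + N * N * (2/D)"
    by (simp add: sum.distrib algebra_simps)
  finally have Sb: "(\<Sum>a<N. \<Sum>b<N. I a b) \<le> N * (2*R) + N * N * (2/D)" .
  define g where "g y = (cmod ((\<Sum>a<N. expo (c a) y) / of_nat N))^2" for y
  have g_eq: "g y = (\<Sum>a<N. \<Sum>b<N. cos ((c a - c b) * y)) / (real N)^2" for y
    unfolding g_def using sum_sq[where c=c and N=N and y=y] by (simp add: norm_divide power_divide)
  define V where "V = (\<Sum>a<N. \<Sum>b<N. I a b) / (real N)^2"
  have hg: "(g has_integral V) {-R..R}"
    unfolding g_eq[abs_def] V_def by (intro has_integral_divide hs)
  have Vb: "V \<le> 2*R/N + 2/D"
  proof -
    have "V \<le> (N * (2*R) + N * N * (2/D)) / (real N)^2"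
      unfolding V_def using Sb by (intro divide_right_mono) auto
    also have "\<dots> = 2*R/N + 2/D" using N by (simp add: field_simps power2_eq_square)
    finally show ?thesis .
  qed
  have g0: "0 \<le> g y" for y unfolding g_def by simp
  have V0: "0 \<le> V" by (rule has_integral_nonneg[OF hg]) (simp add: g0)
  have nn: "(\<integral>\<^sup>+ x. ennreal (g x) * indicator {-R..R} x \<partial>lborel) = ennreal V"
    by (rule nn_integral_has_integral_lebesgue'[OF _ hg]) (simp add: g0)
  have gm: "(\<lambda>x. ennreal (g x) * indicator {-R..R} x) \<in> borel_measurable lebesgue"
  proof -
    have "(\<lambda>x. ennreal (g x) * indicator {-R..R} x) \<in> borel_measurable borel"
      unfolding g_def by measurable
    then have "(\<lambda>x. ennreal (g x) * indicator {-R..R} x) \<in> borel_measurable lborel" by simp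
    then show ?thesis by (rule measurable_completion)
  qed
  have "emeasure lebesgue {x \<in> {-R..R}. t \<le> cmod ((\<Sum>a<N. expo (c a) x) / of_nat N)}
      \<le> emeasure lebesgue {x \<in> {-R..R}. 1 \<le> ennreal (1/t^2) * ennreal (g x)}"
  proof (rule emeasure_mono)
    show "{x \<in> {-R..R}. 1 \<le> ennreal (1/t^2) * ennreal (g x)} \<in> sets lebesgue"
    proof -
      have "{x \<in> {-R..R}. 1 \<le> ennreal (1/t^2) * ennreal (g x)} \<in> sets borel"
        unfolding g_def by measurable
      then show ?thesis by (simp add: sets_completionI_sets)
    qed
    show "{x \<in> {-R..R}. t \<le> cmod ((\<Sum>a<N. expo (c a) x) / of_nat N)}
      \<subseteq> {x \<in> {-R..R}. 1 \<le> ennreal (1/t^2) * ennreal (g x)}"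
    proof safe
      fix x assume "t \<le> cmod ((\<Sum>a<N. expo (c a) x) / of_nat N)"
      then have "t^2 \<le> g x" unfolding g_def using t by (intro power_mono) auto
      then have "1 \<le> g x / t^2" using t by simp
      then have "ennreal 1 \<le> ennreal (g x / t^2)" by (rule ennreal_leI)
      also have "ennreal (g x / t^2) = ennreal (1/t^2) * ennreal (g x)"
        using t g0[of x] by (simp add: ennreal_mult[symmetric] divide_inverse mult.commute)
      finally show "1 \<le> ennreal (1/t^2) * ennreal (g x)" by simp
    qed
  qed
  also have "\<dots> \<le> ennreal (1/t^2) * (\<integral>\<^sup>+ x. ennreal (g x) * indicator {-R..R} x \<partial>lebesgue)"
    by (rule nn_integral_Markov_inequality[OF gm]) simp
  also have "(\<integral>\<^sup>+ x. ennreal (g x) * indicator {-R..R} x \<partial>lebesgue) = ennreal V"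
    using nn by (simp add: nn_integral_completion)
  also have "ennreal (1/t^2) * ennreal V = ennreal (V / t^2)"
    using t V0 by (simp add: ennreal_mult[symmetric] divide_inverse mult.commute)
  also have "\<dots> \<le> ennreal ((2*R/N + 2/D) / t^2)"
    using Vb t by (intro ennreal_leI divide_right_mono) auto
  finally show ?thesis .
qed


lemma expo_leb: "expo l \<in> borel_measurable lebesgue"
proof -
  have "expo l \<in> borel_measurable lborel" using expo_meas by simp
  then show ?thesis by (rule measurable_completion)
qed

lemma expo_norm[simp]: "cmod (expo l x) = 1"
  unfolding expo_def by (simp add: norm_exp_i_times)

lemma div_expo: "z / expo l x = z * expo (-l) x"
  unfolding expo_def by (simp add: exp_minus divide_inverse)


locale bfn =
  fixes \<rho> :: "(real \<Rightarrow> real) \<Rightarrow> ennreal"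
  assumes bfn: "banach_function_norm \<rho>"
begin

lemma nm_cmod: "f \<in> borel_measurable lebesgue \<Longrightarrow> (\<lambda>x. cmod (f x)) \<in> nonneg_meas"
  unfolding nonneg_meas_def by auto

lemma nm_iff: "f \<in> nonneg_meas \<longleftrightarrow> f \<in> borel_measurable lebesgue \<and> (\<forall>x. 0 \<le> f x)"
  unfolding nonneg_meas_def by auto

lemma rho_mono: "f \<in> nonneg_meas \<Longrightarrow> g \<in> nonneg_meas \<Longrightarrow> (\<And>x. g x \<le> f x) \<Longrightarrow> \<rho> g \<le> \<rho> f"
  using bfn unfolding banach_function_norm_def by auto

lemma rho_add: "f \<in> nonneg_meas \<Longrightarrow> g \<in> nonneg_meas \<Longrightarrow> \<rho> (\<lambda>x. f x + g x) \<le> \<rho> f + \<rho> g"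
  using bfn unfolding banach_function_norm_def by auto

lemma rho_scale: "f \<in> nonneg_meas \<Longrightarrow> 0 \<le> c \<Longrightarrow> \<rho> (\<lambda>x. c * f x) = ennreal c * \<rho> f"
  using bfn unfolding banach_function_norm_def by auto

lemma rho_zero_iff: "f \<in> nonneg_meas \<Longrightarrow> \<rho> f = 0 \<longleftrightarrow> (AE x in lebesgue. f x = 0)"
  using bfn unfolding banach_function_norm_def by auto

lemma rho_fatou: "(\<And>n. F n \<in> nonneg_meas) \<Longrightarrow> f \<in> nonneg_meas \<Longrightarrow>
   (AE x in lebesgue. incseq (\<lambda>n. F n x) \<and> (\<lambda>n. F n x) \<longlonglongrightarrow> f x) \<Longrightarrow> (SUP n. \<rho> (F n)) = \<rho> f"
  using bfn unfolding banach_function_norm_def by blast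

lemma rho_le_sum:
  assumes g: "g \<in> borel_measurable lebesgue" and f1: "f1 \<in> nonneg_meas" and f2: "f2 \<in> nonneg_meas"
    and le: "\<And>x. cmod (g x) \<le> f1 x + f2 x"
  shows "\<rho> (\<lambda>x. cmod (g x)) \<le> \<rho> f1 + \<rho> f2"
proof -
  have s: "(\<lambda>x. f1 x + f2 x) \<in> nonneg_meas" using f1 f2 unfolding nonneg_meas_def by auto
  have "\<rho> (\<lambda>x. cmod (g x)) \<le> \<rho> (\<lambda>x. f1 x + f2 x)"
    by (rule rho_mono[OF s nm_cmod[OF g] le])
  also have "\<dots> \<le> \<rho> f1 + \<rho> f2" by (rule rho_add[OF f1 f2])
  finally show ?thesis .
qed

lemma rho_le_scale:
  assumes g: "g \<in> borel_measurable lebesgue" and f1: "f1 \<in> nonneg_meas" and c: "0 \<le> c"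
    and le: "\<And>x. cmod (g x) \<le> c * f1 x"
  shows "\<rho> (\<lambda>x. cmod (g x)) \<le> ennreal c * \<rho> f1"
proof -
  have s: "(\<lambda>x. c * f1 x) \<in> nonneg_meas" using f1 c unfolding nonneg_meas_def by auto
  have "\<rho> (\<lambda>x. cmod (g x)) \<le> \<rho> (\<lambda>x. c * f1 x)"
    by (rule rho_mono[OF s nm_cmod[OF g] le])
  also have "\<dots> = ennreal c * \<rho> f1" by (rule rho_scale[OF f1 c])
  finally show ?thesis .
qed

lemma bfs_add_le:
  assumes a: "a \<in> bfs \<rho>" and b: "b \<in> bfs \<rho>" and g: "g \<in> borel_measurable lebesgue"
    and le: "\<And>x. cmod (g x) \<le> cmod (a x) + cmod (b x)"
  shows "g \<in> bfs \<rho>" "bfs_norm \<rho> g \<le> bfs_norm \<rho> a + bfs_norm \<rho> b"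
proof -
  have am: "a \<in> borel_measurable lebesgue" and af: "\<rho> (\<lambda>x. cmod (a x)) < \<infinity>"
    using a unfolding bfs_def by auto
  have bm: "b \<in> borel_measurable lebesgue" and bf: "\<rho> (\<lambda>x. cmod (b x)) < \<infinity>"
    using b unfolding bfs_def by auto
  have r: "\<rho> (\<lambda>x. cmod (g x)) \<le> \<rho> (\<lambda>x. cmod (a x)) + \<rho> (\<lambda>x. cmod (b x))"
    by (rule rho_le_sum[OF g nm_cmod[OF am] nm_cmod[OF bm] le])
  with af bf have gf: "\<rho> (\<lambda>x. cmod (g x)) < \<infinity>"
    by (metis ennreal_add_eq_top infinity_ennreal_def le_less_trans top.not_eq_extremum)
  then show "g \<in> bfs \<rho>" using g unfolding bfs_def by auto
  have "enn2real (\<rho> (\<lambda>x. cmod (g x))) \<le> enn2real (\<rho> (\<lambda>x. cmod (a x)) + \<rho> (\<lambda>x. cmod (b x)))"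
    using r af bf by (intro enn2real_mono) auto
  also have "\<dots> = enn2real (\<rho> (\<lambda>x. cmod (a x))) + enn2real (\<rho> (\<lambda>x. cmod (b x)))"
    using af bf by (intro enn2real_plus) auto
  finally show "bfs_norm \<rho> g \<le> bfs_norm \<rho> a + bfs_norm \<rho> b" unfolding bfs_norm_def .
qed

lemma bfs_scale_le:
  assumes a: "a \<in> bfs \<rho>" and g: "g \<in> borel_measurable lebesgue" and c: "0 \<le> c"
    and le: "\<And>x. cmod (g x) \<le> c * cmod (a x)"
  shows "g \<in> bfs \<rho>" "bfs_norm \<rho> g \<le> c * bfs_norm \<rho> a"
proof -
  have am: "a \<in> borel_measurable lebesgue" and af: "\<rho> (\<lambda>x. cmod (a x)) < \<infinity>"
    using a unfolding bfs_def by auto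
  have r: "\<rho> (\<lambda>x. cmod (g x)) \<le> ennreal c * \<rho> (\<lambda>x. cmod (a x))"
    by (rule rho_le_scale[OF g nm_cmod[OF am] c le])
  with af have gf: "\<rho> (\<lambda>x. cmod (g x)) < \<infinity>"
    by (metis ennreal_mult_eq_top_iff ennreal_neq_top infinity_ennreal_def le_less_trans top.not_eq_extremum)
  then show "g \<in> bfs \<rho>" using g unfolding bfs_def by auto
  have "enn2real (\<rho> (\<lambda>x. cmod (g x))) \<le> enn2real (ennreal c * \<rho> (\<lambda>x. cmod (a x)))"
    using r af by (intro enn2real_mono) (auto simp: ennreal_mult_less_top)
  also have "\<dots> = c * enn2real (\<rho> (\<lambda>x. cmod (a x)))"
    using c by (simp add: enn2real_mult)
  finally show "bfs_norm \<rho> g \<le> c * bfs_norm \<rho> a" unfolding bfs_norm_def .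
qed


lemma bfs_meas: "a \<in> bfs \<rho> \<Longrightarrow> a \<in> borel_measurable lebesgue"
  unfolding bfs_def by auto

lemma bfs_diff: assumes a: "a \<in> bfs \<rho>" and b: "b \<in> bfs \<rho>" shows "(\<lambda>x. a x - b x) \<in> bfs \<rho>"
  by (rule bfs_add_le(1)[OF a b borel_measurable_diff[OF bfs_meas[OF a] bfs_meas[OF b]]]) (simp add: norm_triangle_ineq4)

lemma bfs_plus: assumes a: "a \<in> bfs \<rho>" and b: "b \<in> bfs \<rho>" shows "(\<lambda>x. a x + b x) \<in> bfs \<rho>"
  by (rule bfs_add_le(1)[OF a b borel_measurable_add[OF bfs_meas[OF a] bfs_meas[OF b]]]) (simp add: norm_triangle_ineq)

lemma bfs_norm_sym: "bfs_norm \<rho> (\<lambda>x. a x - b x) = bfs_norm \<rho> (\<lambda>x. b x - a x)"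
  by (simp add: bfs_norm_def norm_minus_commute)

lemma bfs_tri:
  assumes "a \<in> bfs \<rho>" "b \<in> bfs \<rho>" "c \<in> bfs \<rho>"
  shows "bfs_norm \<rho> (\<lambda>x. a x - c x) \<le> bfs_norm \<rho> (\<lambda>x. a x - b x) + bfs_norm \<rho> (\<lambda>x. b x - c x)"
proof (rule bfs_add_le(2))
  show "(\<lambda>x. a x - b x) \<in> bfs \<rho>" "(\<lambda>x. b x - c x) \<in> bfs \<rho>" using assms bfs_diff by auto
  show "(\<lambda>x. a x - c x) \<in> borel_measurable lebesgue" using assms by (intro borel_measurable_diff bfs_meas)
  show "cmod (a x - c x) \<le> cmod (a x - b x) + cmod (b x - c x)" for x
    using norm_triangle_ineq[of "a x - b x" "b x - c x"] by simp
qed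

lemma nat_set_uncountable: "\<not> countable (UNIV :: nat set set)"
  by (metis Cantors_theorem Int_UNIV_left Int_lower1 Pow_not_empty countable_subset uncountable_def)

lemma sep_contra:
  fixes G :: "nat \<Rightarrow> real set"
  assumes sep: "bfs_separable \<rho>" and f: "f \<in> bfs \<rho>"
    and G: "\<And>j. G j \<in> sets lebesgue" and disj: "\<And>i j. i \<noteq> j \<Longrightarrow> G i \<inter> G j = {}"
    and big: "\<And>j. bfs_norm \<rho> (\<lambda>x. f x * indicator (G j) x) \<ge> \<delta>" and dpos: "\<delta> > 0"
  shows False
proof -
  define w where "w S = (\<lambda>x. f x * indicator (\<Union>j\<in>S. G j) x)" for S :: "nat set"
  have wb: "w S \<in> bfs \<rho>" for S
  proof (rule bfs_scale_le(1)[OF f, of _ 1])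
    have "(\<Union>j\<in>S. G j) \<in> sets lebesgue" using G by (intro sets.countable_UN') auto
    then show "w S \<in> borel_measurable lebesgue" unfolding w_def using bfs_meas[OF f] by measurable
    show "cmod (w S x) \<le> 1 * cmod (f x)" for x by (auto simp: w_def indicator_def)
  qed simp
  have far: "\<delta> \<le> bfs_norm \<rho> (\<lambda>x. w S x - w S' x)" if "S \<noteq> S'" for S S'
  proof -
    have key: "\<delta> \<le> bfs_norm \<rho> (\<lambda>x. w S x - w S' x)" if j: "j \<in> S" "j \<notin> S'" for S S' j
    proof -
      have "bfs_norm \<rho> (\<lambda>x. f x * indicator (G j) x) \<le> 1 * bfs_norm \<rho> (\<lambda>x. w S x - w S' x)"
      proof (rule bfs_scale_le(2))
        show "(\<lambda>x. w S x - w S' x) \<in> bfs \<rho>" using wb bfs_diff by auto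
        show "(\<lambda>x. f x * indicator (G j) x) \<in> borel_measurable lebesgue"
          using bfs_meas[OF f] G[of j] by measurable
        show "cmod (f x * indicator (G j) x) \<le> 1 * cmod (w S x - w S' x)" for x
        proof (cases "x \<in> G j")
          case True
          then have "x \<in> (\<Union>j\<in>S. G j)" using j by auto
          moreover have "x \<notin> (\<Union>j\<in>S'. G j)"
          proof
            assume "x \<in> (\<Union>j\<in>S'. G j)"
            then obtain i where "i \<in> S'" "x \<in> G i" by blast
            then have "i \<noteq> j" using j by auto
            then show False using disj[of i j] \<open>x \<in> G i\<close> True by blast
          qed
          ultimately show ?thesis using True by (simp add: w_def)
        qed simp
      qed simp
      then show ?thesis using big[of j] by simp
    qed
    from that obtain j where "(j \<in> S \<and> j \<notin> S') \<or> (j \<in> S' \<and> j \<notin> S)" by blast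
    then show ?thesis
    proof
      assume "j \<in> S \<and> j \<notin> S'" then show ?thesis using key by blast
    next
      assume "j \<in> S' \<and> j \<notin> S" then show ?thesis using key[of j S' S] bfs_norm_sym by metis
    qed
  qed
  obtain D where D: "countable D" "D \<subseteq> bfs \<rho>"
    and dense0: "\<forall>g\<in>bfs \<rho>. \<forall>e>0. \<exists>d\<in>D. bfs_norm \<rho> (\<lambda>x. g x - d x) < e"
    using sep unfolding bfs_separable_def by (elim exE conjE) (rule that)
  have dense: "\<exists>d\<in>D. bfs_norm \<rho> (\<lambda>x. g x - d x) < e" if "g \<in> bfs \<rho>" "e > 0" for g e
    using dense0 that by blast
  define d where "d S = (SOME d. d \<in> D \<and> bfs_norm \<rho> (\<lambda>x. w S x - d x) < \<delta>/2)" for S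
  have dS: "d S \<in> D \<and> bfs_norm \<rho> (\<lambda>x. w S x - d S x) < \<delta>/2" for S
  proof -
    have "\<delta>/2 > 0" using dpos by simp
    from dense[OF wb[of S] this] have "\<exists>dd. dd \<in> D \<and> bfs_norm \<rho> (\<lambda>x. w S x - dd x) < \<delta>/2" by blast
    then show ?thesis unfolding d_def by (rule someI_ex)
  qed
  have "inj d"
  proof (rule injI)
    fix S S' assume eq: "d S = d S'"
    show "S = S'"
    proof (rule ccontr)
      assume ne: "S \<noteq> S'"
      have "bfs_norm \<rho> (\<lambda>x. w S x - w S' x) \<le> bfs_norm \<rho> (\<lambda>x. w S x - d S x) + bfs_norm \<rho> (\<lambda>x. d S x - w S' x)"
        using wb dS D(2) by (intro bfs_tri) auto
      also have "bfs_norm \<rho> (\<lambda>x. d S x - w S' x) = bfs_norm \<rho> (\<lambda>x. w S' x - d S' x)"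
        using eq bfs_norm_sym by metis
      finally have "bfs_norm \<rho> (\<lambda>x. w S x - w S' x) < \<delta>" using dS[of S] dS[of S'] by linarith
      with far[OF ne] show False by simp
    qed
  qed
  moreover have "d ` UNIV \<subseteq> D" using dS by auto
  then have "countable (d ` UNIV)" using D(1) countable_subset by blast
  ultimately have "countable (UNIV :: nat set set)"
    using countable_image_inj_on by blast
  then show False using nat_set_uncountable by simp
qed

lemma rho_0: "\<rho> (\<lambda>x. 0) = 0"
proof -
  have "(\<lambda>x::real. 0::real) \<in> nonneg_meas" by (simp add: nonneg_meas_def)
  from rho_scale[OF this, of 0] show ?thesis by simp
qed

lemma rho_fin: "a \<in> bfs \<rho> \<Longrightarrow> \<rho> (\<lambda>x. cmod (a x)) = ennreal (bfs_norm \<rho> a)"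
  unfolding bfs_def bfs_norm_def by (auto simp: ennreal_enn2real_if)

lemma bfs_ind: assumes a: "a \<in> bfs \<rho>" and A: "A \<in> sets lebesgue"
  shows "(\<lambda>x. a x * indicator A x) \<in> bfs \<rho>"
proof (rule bfs_scale_le(1)[OF a _, of _ 1])
  show "(\<lambda>x. a x * indicator A x) \<in> borel_measurable lebesgue" using bfs_meas[OF a] A by measurable
  show "cmod (a x * indicator A x) \<le> 1 * cmod (a x)" for x by (simp add: indicator_def)
qed simp

lemma ac:
  fixes B :: "nat \<Rightarrow> real set"
  assumes sep: "bfs_separable \<rho>" and f: "f \<in> bfs \<rho>"
    and B: "\<And>m. B m \<in> sets lebesgue" and dec: "\<And>m. B (Suc m) \<subseteq> B m"
    and null: "emeasure lebesgue (\<Inter>m. B m) = 0" and e: "\<epsilon> > 0"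
  shows "\<exists>m. bfs_norm \<rho> (\<lambda>x. f x * indicator (B m) x) < \<epsilon>"
proof (rule ccontr)
  assume "\<not> ?thesis"
  then have big: "\<epsilon> \<le> bfs_norm \<rho> (\<lambda>x. f x * indicator (B m) x)" for m by (simp add: not_less)
  have decs: "decseq B" using dec by (simp add: decseq_Suc_iff)
  have fm: "f \<in> borel_measurable lebesgue" using f by (rule bfs_meas)
  have IB: "(\<Inter>m. B m) \<in> null_sets lebesgue" using B null by (auto simp: null_sets_def)
  have step: "\<exists>m'. \<epsilon>/2 < bfs_norm \<rho> (\<lambda>x. f x * indicator (B m - B m') x)" for m
  proof -
    define F where "F n = (\<lambda>x. cmod (f x * indicator (B m - B n) x))" for n
    have Fnm: "F n \<in> nonneg_meas" for n unfolding F_def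
      by (rule nm_cmod) (use fm B in measurable)
    have lim: "(SUP n. \<rho> (F n)) = \<rho> (\<lambda>x. cmod (f x * indicator (B m) x))"
    proof (rule rho_fatou[OF Fnm nm_cmod])
      show "(\<lambda>x. f x * indicator (B m) x) \<in> borel_measurable lebesgue" using fm B by measurable
      show "AE x in lebesgue. incseq (\<lambda>n. F n x) \<and> (\<lambda>n. F n x) \<longlonglongrightarrow> cmod (f x * indicator (B m) x)"
      proof (rule AE_I'[OF IB], rule subsetI, rule ccontr)
        fix x assume xin: "x \<in> {x \<in> space lebesgue. \<not> (incseq (\<lambda>n. F n x) \<and> (\<lambda>n. F n x) \<longlonglongrightarrow> cmod (f x * indicator (B m) x))}"
          and nx: "x \<notin> (\<Inter>m. B m)"
        have inc: "incseq (\<lambda>n. F n x)"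
        proof (rule incseq_SucI)
          fix n
          have "B (Suc n) \<subseteq> B n" by (rule dec)
          then show "F n x \<le> F (Suc n) x" unfolding F_def
            by (cases "x \<in> B m"; cases "x \<in> B n"; cases "x \<in> B (Suc n)") auto
        qed
        from nx obtain n0 where n0: "x \<notin> B n0" by blast
        have "eventually (\<lambda>n. F n x = cmod (f x * indicator (B m) x)) sequentially"
        proof (rule eventually_sequentiallyI[of n0])
          fix n assume "n0 \<le> n"
          then have "B n \<subseteq> B n0" using decs by (simp add: decseq_def)
          then show "F n x = cmod (f x * indicator (B m) x)" using n0 unfolding F_def
            by (auto simp: indicator_def)
        qed
        then have "(\<lambda>n. F n x) \<longlonglongrightarrow> cmod (f x * indicator (B m) x)" by (rule tendsto_eventually)
        with inc xin show False by simp
      qed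
    qed
    have "ennreal \<epsilon> \<le> \<rho> (\<lambda>x. cmod (f x * indicator (B m) x))"
      using big[of m] rho_fin[OF bfs_ind[OF f B]] by (simp add: ennreal_leI)
    moreover have "ennreal (\<epsilon>/2) < ennreal \<epsilon>" using e by (simp add: ennreal_lessI)
    ultimately have "ennreal (\<epsilon>/2) < (SUP n. \<rho> (F n))" using lim by simp
    then obtain n where "ennreal (\<epsilon>/2) < \<rho> (F n)" by (auto simp: less_SUP_iff)
    also have "\<rho> (F n) = ennreal (bfs_norm \<rho> (\<lambda>x. f x * indicator (B m - B n) x))"
      unfolding F_def by (rule rho_fin[OF bfs_ind[OF f]]) (use B in auto)
    finally have "\<epsilon>/2 < bfs_norm \<rho> (\<lambda>x. f x * indicator (B m - B n) x)"
      by (metis ennreal_leI leD not_le)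
    then show ?thesis by blast
  qed
  then obtain g where g: "\<And>m. \<epsilon>/2 < bfs_norm \<rho> (\<lambda>x. f x * indicator (B m - B (g m)) x)"
    by metis
  have gm: "m < g m" for m
  proof (rule ccontr)
    assume "\<not> m < g m"
    then have "B m \<subseteq> B (g m)" using decs by (simp add: decseq_def)
    then have e0: "B m - B (g m) = {}" by auto
    have "(\<lambda>x. f x * indicator (B m - B (g m)) x) = (\<lambda>x. 0)" unfolding e0 by simp
    then show False using g[of m] e by (simp add: bfs_norm_def rho_0)
  qed
  define mm where "mm j = (g ^^ j) 0" for j
  have mmS: "mm (Suc j) = g (mm j)" for j by (simp add: mm_def)
  have smm: "strict_mono mm" unfolding strict_mono_Suc_iff using mmS gm by simp
  define G where "G j = B (mm j) - B (mm (Suc j))" for j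
  show False
  proof (rule sep_contra[OF sep f])
    show "G j \<in> sets lebesgue" for j unfolding G_def using B by auto
    show "\<epsilon>/2 \<le> bfs_norm \<rho> (\<lambda>x. f x * indicator (G j) x)" for j
      using g[of "mm j"] unfolding G_def mmS by simp
    show "\<epsilon>/2 > 0" using e by simp
    show "G i \<inter> G j = {}" if "i \<noteq> j" for i j
    proof -
      have *: "G i \<inter> G j = {}" if "i < j" for i j
      proof -
        have "Suc i \<le> j" using that by simp
        then have "mm (Suc i) \<le> mm j" using smm strict_mono_less_eq by blast
        then have "B (mm j) \<subseteq> B (mm (Suc i))" using decs by (simp add: decseq_def)
        then show ?thesis unfolding G_def by auto
      qed
      show ?thesis using that *[of i j] *[of j i] by (cases "i < j") (auto simp: Int_commute)
    qed
  qed
qed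

lemma uac:
  assumes sep: "bfs_separable \<rho>" and f: "f \<in> bfs \<rho>" and e: "\<epsilon> > 0"
  shows "\<exists>\<eta>>0. \<forall>A\<in>sets lebesgue. emeasure lebesgue A < ennreal \<eta> \<longrightarrow>
            bfs_norm \<rho> (\<lambda>x. f x * indicator A x) < \<epsilon>"
proof (rule ccontr)
  assume "\<not> ?thesis"
  then have "\<forall>\<eta>>0. \<exists>A\<in>sets lebesgue. emeasure lebesgue A < ennreal \<eta> \<and>
            \<epsilon> \<le> bfs_norm \<rho> (\<lambda>x. f x * indicator A x)" by (meson not_less)
  note H = this
  have "\<forall>k::nat. \<exists>A\<in>sets lebesgue. emeasure lebesgue A < ennreal ((1/2)^k) \<and>
            \<epsilon> \<le> bfs_norm \<rho> (\<lambda>x. f x * indicator A x)"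
  proof
    fix k :: nat
    have "(0::real) < (1/2)^k" by simp
    from H[rule_format, OF this] show "\<exists>A\<in>sets lebesgue. emeasure lebesgue A < ennreal ((1/2)^k) \<and>
            \<epsilon> \<le> bfs_norm \<rho> (\<lambda>x. f x * indicator A x)" .
  qed
  then obtain A where A: "\<And>k. A k \<in> sets lebesgue" "\<And>k. emeasure lebesgue (A k) < ennreal ((1/2)^k)"
    "\<And>k. \<epsilon> \<le> bfs_norm \<rho> (\<lambda>x. f x * indicator (A k) x)" by metis
  define B where "B m = (\<Union>k. A (k + m))" for m
  have Bs: "B m \<in> sets lebesgue" for m unfolding B_def using A(1) by auto
  have Bd: "B (Suc m) \<subseteq> B m" for m unfolding B_def
    by (auto, metis add_Suc_right add_Suc)
  have Bm: "emeasure lebesgue (B m) \<le> ennreal (2 * (1/2)^m)" for m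
  proof -
    have "emeasure lebesgue (B m) \<le> (\<Sum>k. emeasure lebesgue (A (k + m)))"
      unfolding B_def using A(1) by (intro emeasure_subadditive_countably) auto
    also have "\<dots> \<le> (\<Sum>k. ennreal ((1/2)^(k+m)))"
      using A(2) by (intro suminf_le) (auto intro: less_imp_le)
    also have "\<dots> = ennreal (\<Sum>k. (1/2)^(k+m))"
      by (intro suminf_ennreal2) (auto simp: power_add intro!: summable_mult2)
    also have "(\<Sum>k. (1/2::real)^(k+m)) = 2 * (1/2)^m"
      by (simp add: power_add suminf_mult2[symmetric] suminf_geometric)
    finally show ?thesis .
  qed
  have null: "emeasure lebesgue (\<Inter>m. B m) = 0"
  proof -
    have le: "emeasure lebesgue (\<Inter>m. B m) \<le> ennreal (2 * (1/2)^m)" for m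
      using Bm[of m] emeasure_mono[of "\<Inter>m. B m" "B m" lebesgue] Bs by (meson INT_lower UNIV_I order.trans)
    have "(\<lambda>m. ennreal (2 * (1/2::real)^m)) \<longlonglongrightarrow> ennreal (2 * 0)"
      by (intro tendsto_ennrealI tendsto_mult tendsto_const LIMSEQ_power_zero) simp
    then have "emeasure lebesgue (\<Inter>m. B m) \<le> 0"
      using le by (intro LIMSEQ_le_const) auto
    then show ?thesis by simp
  qed
  obtain m where m: "bfs_norm \<rho> (\<lambda>x. f x * indicator (B m) x) < \<epsilon>"
    using ac[OF sep f Bs Bd null e] by blast
  have "bfs_norm \<rho> (\<lambda>x. f x * indicator (A m) x) \<le> 1 * bfs_norm \<rho> (\<lambda>x. f x * indicator (B m) x)"
  proof (rule bfs_scale_le(2))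
    show "(\<lambda>x. f x * indicator (B m) x) \<in> bfs \<rho>" using bfs_ind[OF f Bs] .
    show "(\<lambda>x. f x * indicator (A m) x) \<in> borel_measurable lebesgue" using bfs_meas[OF f] A(1)[of m] by measurable
    have "A m \<subseteq> B m" unfolding B_def
    proof
      fix x assume "x \<in> A m" then show "x \<in> (\<Union>k. A (k + m))" by (intro UN_I[of 0]) auto
    qed
    then show "cmod (f x * indicator (A m) x) \<le> 1 * cmod (f x * indicator (B m) x)" for x
      by (auto simp: indicator_def)
  qed simp
  with m A(3)[of m] show False by simp
qed

lemma zero_bfs: "(\<lambda>x. 0) \<in> bfs \<rho>"
  unfolding bfs_def by (simp add: rho_0)

lemma bfs_norm_0: "bfs_norm \<rho> (\<lambda>x. 0) = 0"
  unfolding bfs_norm_def by (simp add: rho_0)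

lemma bfs_scale: assumes a: "a \<in> bfs \<rho>" shows "(\<lambda>x. c * a x) \<in> bfs \<rho>"
  by (rule bfs_scale_le(1)[OF a _, of _ "cmod c"]) (auto simp: norm_mult intro!: borel_measurable_times bfs_meas[OF a])

lemma bfs_sum_le:
  assumes "finite A" "\<And>a. a \<in> A \<Longrightarrow> u a \<in> bfs \<rho>"
  shows "(\<lambda>x. \<Sum>a\<in>A. u a x) \<in> bfs \<rho> \<and> bfs_norm \<rho> (\<lambda>x. \<Sum>a\<in>A. u a x) \<le> (\<Sum>a\<in>A. bfs_norm \<rho> (u a))"
  using assms
proof (induction A rule: finite_induct)
  case empty then show ?case by (simp add: zero_bfs bfs_norm_0)
next
  case (insert a A)
  then have ua: "u a \<in> bfs \<rho>" and IH: "(\<lambda>x. \<Sum>a\<in>A. u a x) \<in> bfs \<rho>"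
    "bfs_norm \<rho> (\<lambda>x. \<Sum>a\<in>A. u a x) \<le> (\<Sum>a\<in>A. bfs_norm \<rho> (u a))" by auto
  have eq: "(\<lambda>x. \<Sum>a\<in>insert a A. u a x) = (\<lambda>x. u a x + (\<Sum>a\<in>A. u a x))"
    using insert by simp
  have m: "(\<lambda>x. u a x + (\<Sum>a\<in>A. u a x)) \<in> borel_measurable lebesgue"
    by (intro borel_measurable_add bfs_meas ua IH(1))
  have "(\<lambda>x. u a x + (\<Sum>a\<in>A. u a x)) \<in> bfs \<rho>"
    "bfs_norm \<rho> (\<lambda>x. u a x + (\<Sum>a\<in>A. u a x)) \<le> bfs_norm \<rho> (u a) + bfs_norm \<rho> (\<lambda>x. \<Sum>a\<in>A. u a x)"
    by (rule bfs_add_le[OF ua IH(1) m], simp add: norm_triangle_ineq)+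
  then show ?case using eq IH(2) insert by simp
qed

lemma bfs_norm_nonneg: "0 \<le> bfs_norm \<rho> f"
  unfolding bfs_norm_def by simp

end

locale bfsK = bfn +
  fixes K :: "(real \<Rightarrow> complex) \<Rightarrow> (real \<Rightarrow> complex)"
  assumes sep: "bfs_separable \<rho>" and cpt: "bfs_compact_operator \<rho> K"
begin

lemma K_bfs: "a \<in> bfs \<rho> \<Longrightarrow> K a \<in> bfs \<rho>"
  using cpt unfolding bfs_compact_operator_def by blast

lemma K_add: "a \<in> bfs \<rho> \<Longrightarrow> b \<in> bfs \<rho> \<Longrightarrow> K (\<lambda>x. a x + b x) = (\<lambda>x. K a x + K b x)"
  using cpt unfolding bfs_compact_operator_def by blast

lemma K_scale: "a \<in> bfs \<rho> \<Longrightarrow> K (\<lambda>x. c * a x) = (\<lambda>x. c * K a x)"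
  using cpt unfolding bfs_compact_operator_def by blast

lemma K_cpt: fixes u :: "nat \<Rightarrow> real \<Rightarrow> complex" assumes "\<And>n. u n \<in> bfs \<rho>" "\<And>n. bfs_norm \<rho> (u n) \<le> B"
  shows "\<exists>r g. strict_mono r \<and> g \<in> bfs \<rho> \<and> (\<lambda>n. bfs_norm \<rho> (\<lambda>x. K (u (r n)) x - g x)) \<longlonglongrightarrow> 0"
proof -
  have c4: "\<forall>u::nat \<Rightarrow> real \<Rightarrow> complex. (\<forall>n. u n \<in> bfs \<rho>) \<longrightarrow>
        (\<exists>B. \<forall>n. bfs_norm \<rho> (u n) \<le> B) \<longrightarrow>
        (\<exists>r g. strict_mono r \<and> g \<in> bfs \<rho> \<and>
           (\<lambda>n. bfs_norm \<rho> (\<lambda>x. K (u (r n)) x - g x)) \<longlonglongrightarrow> 0)"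
    using cpt unfolding bfs_compact_operator_def by blast
  have a1: "\<forall>n. u n \<in> bfs \<rho>" and a2: "\<exists>B. \<forall>n. bfs_norm \<rho> (u n) \<le> B" using assms by auto
  show ?thesis by (rule mp[OF mp[OF spec[OF c4, of u] a1] a2])
qed

lemma K_sum:
  assumes "finite A" "\<And>a. a \<in> A \<Longrightarrow> u a \<in> bfs \<rho>"
  shows "K (\<lambda>x. \<Sum>a\<in>A. u a x) = (\<lambda>x. \<Sum>a\<in>A. K (u a) x)"
  using assms
proof (induction A rule: finite_induct)
  case empty
  have "K (\<lambda>x. 0 * 0) = (\<lambda>x. 0 * K (\<lambda>x. 0) x)" by (rule K_scale[OF zero_bfs])
  then show ?case by simp
next
  case (insert a A)
  then have ua: "u a \<in> bfs \<rho>" and S: "(\<lambda>x. \<Sum>a\<in>A. u a x) \<in> bfs \<rho>"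
    using bfs_sum_le[of A u] by auto
  have "K (\<lambda>x. \<Sum>a\<in>insert a A. u a x) = K (\<lambda>x. u a x + (\<Sum>a\<in>A. u a x))"
    using insert by simp
  also have "\<dots> = (\<lambda>x. K (u a) x + K (\<lambda>x. \<Sum>a\<in>A. u a x) x)" by (rule K_add[OF ua S])
  finally show ?case using insert by simp
qed

lemma bfs_le_sum2:
  assumes a: "a \<in> bfs \<rho>" and b: "b \<in> bfs \<rho>"
  shows "bfs_norm \<rho> a \<le> bfs_norm \<rho> (\<lambda>x. a x - b x) + bfs_norm \<rho> b"
  by (rule bfs_add_le(2)[OF bfs_diff[OF a b] b bfs_meas[OF a]])
     (use norm_triangle_ineq[of "a x - b x" "b x" for x] in simp)

lemma K_unit: "\<exists>C. \<forall>v\<in>bfs \<rho>. bfs_norm \<rho> v \<le> 1 \<longrightarrow> bfs_norm \<rho> (K v) \<le> C"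
proof (rule ccontr)
  assume neg: "\<not> (\<exists>C. \<forall>v\<in>bfs \<rho>. bfs_norm \<rho> v \<le> 1 \<longrightarrow> bfs_norm \<rho> (K v) \<le> C)"
  have "\<forall>n::nat. \<exists>v. v \<in> bfs \<rho> \<and> bfs_norm \<rho> v \<le> 1 \<and> real n < bfs_norm \<rho> (K v)"
  proof (intro allI)
    fix n :: nat
    from neg have "\<not> (\<forall>v\<in>bfs \<rho>. bfs_norm \<rho> v \<le> 1 \<longrightarrow> bfs_norm \<rho> (K v) \<le> real n)"
      by blast
    then show "\<exists>v. v \<in> bfs \<rho> \<and> bfs_norm \<rho> v \<le> 1 \<and> real n < bfs_norm \<rho> (K v)"
      by (auto simp: not_le)
  qed
  then have "\<exists>v. \<forall>n::nat. v n \<in> bfs \<rho> \<and> bfs_norm \<rho> (v n) \<le> 1 \<and> real n < bfs_norm \<rho> (K (v n))"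
    by (rule choice)
  then obtain v where v0: "\<forall>n::nat. v n \<in> bfs \<rho> \<and> bfs_norm \<rho> (v n) \<le> 1 \<and> real n < bfs_norm \<rho> (K (v n))"
    by blast
  have v: "\<And>n. v n \<in> bfs \<rho>" "\<And>n. bfs_norm \<rho> (v n) \<le> 1"
    "\<And>n. real n < bfs_norm \<rho> (K (v n))" using v0 by auto
  obtain r g where r: "strict_mono r" and g: "g \<in> bfs \<rho>"
    and lim: "(\<lambda>n. bfs_norm \<rho> (\<lambda>x. K (v (r n)) x - g x)) \<longlonglongrightarrow> 0"
    using K_cpt[where u=v and B=1, OF v(1) v(2)] by (elim exE conjE) (rule that)
  obtain M where M: "\<And>n. n \<ge> M \<Longrightarrow> bfs_norm \<rho> (\<lambda>x. K (v (r n)) x - g x) < 1"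
    using lim[THEN order_tendstoD(2), of 1] by (auto simp: eventually_sequentially)
  define n where "n = max M (nat \<lceil>1 + bfs_norm \<rho> g\<rceil>)"
  have n: "n \<ge> M" "real n \<ge> 1 + bfs_norm \<rho> g"
  proof -
    show "n \<ge> M" by (simp add: n_def)
    have "1 + bfs_norm \<rho> g \<le> real (nat \<lceil>1 + bfs_norm \<rho> g\<rceil>)" by (rule real_nat_ceiling_ge)
    also have "\<dots> \<le> real n" by (simp add: n_def)
    finally show "real n \<ge> 1 + bfs_norm \<rho> g" .
  qed
  have "bfs_norm \<rho> (K (v (r n))) \<le> bfs_norm \<rho> (\<lambda>x. K (v (r n)) x - g x) + bfs_norm \<rho> g"
    by (rule bfs_le_sum2[OF K_bfs[OF v(1)] g])
  also have "\<dots> < 1 + bfs_norm \<rho> g" using M[OF n(1)] by simp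
  also have "\<dots> \<le> real (r n)" using n(2) seq_suble[OF r, of n] by linarith
  finally show False using v(3)[of "r n"] by simp
qed

lemma K_bound: "\<exists>C\<ge>0. \<forall>v\<in>bfs \<rho>. \<forall>s>0. bfs_norm \<rho> v \<le> s \<longrightarrow> bfs_norm \<rho> (K v) \<le> C * s"
proof -
  obtain C where C: "\<And>v. v \<in> bfs \<rho> \<Longrightarrow> bfs_norm \<rho> v \<le> 1 \<Longrightarrow> bfs_norm \<rho> (K v) \<le> C"
    using K_unit by blast
  have "bfs_norm \<rho> (K (\<lambda>x. 0)) \<le> C" by (rule C[OF zero_bfs]) (simp add: bfs_norm_0)
  moreover have "0 \<le> bfs_norm \<rho> (K (\<lambda>x. 0))" by (rule bfs_norm_nonneg)
  ultimately have C0: "0 \<le> C" by linarith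
  have "bfs_norm \<rho> (K v) \<le> C * s" if v: "v \<in> bfs \<rho>" and s: "s > 0" "bfs_norm \<rho> v \<le> s" for v s
  proof -
    define v' where "v' = (\<lambda>x. complex_of_real (1/s) * v x)"
    have v'b: "v' \<in> bfs \<rho>" unfolding v'_def by (rule bfs_scale[OF v])
    have "bfs_norm \<rho> v' \<le> (1/s) * bfs_norm \<rho> v"
    proof (rule bfs_scale_le(2)[OF v])
      show "v' \<in> borel_measurable lebesgue" unfolding v'_def
        by (intro borel_measurable_times borel_measurable_const bfs_meas[OF v])
      show "cmod (v' x) \<le> (1/s) * cmod (v x)" for x using s by (simp add: v'_def norm_mult norm_divide)
    qed (use s in simp)
    also have "\<dots> \<le> 1" using s by (simp add: field_simps)
    finally have K1: "bfs_norm \<rho> (K v') \<le> C" by (rule C[OF v'b])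
    have veq: "v = (\<lambda>x. complex_of_real s * v' x)" using s by (simp add: v'_def)
    have "K v = K (\<lambda>x. complex_of_real s * v' x)" by (subst veq) (rule refl)
    also have "\<dots> = (\<lambda>x. complex_of_real s * K v' x)" by (rule K_scale[OF v'b])
    finally have "K v = (\<lambda>x. complex_of_real s * K v' x)" .
    then have "bfs_norm \<rho> (K v) \<le> s * bfs_norm \<rho> (K v')"
    proof (intro bfs_scale_le(2)[OF K_bfs[OF v'b]])
      assume e: "K v = (\<lambda>x. complex_of_real s * K v' x)"
      show "K v \<in> borel_measurable lebesgue" unfolding e
        by (intro borel_measurable_times borel_measurable_const bfs_meas[OF K_bfs[OF v'b]])
      show "cmod (K v x) \<le> s * cmod (K v' x)" for x using s by (simp add: e norm_mult)
    qed (use s in simp)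
    also have "\<dots> \<le> s * C" using K1 s by simp
    finally show ?thesis by (simp add: mult.commute)
  qed
  then show ?thesis using C0 by blast
qed

lemma main:
  assumes hinf: "filterlim h at_top sequentially \<or> filterlim h at_bot sequentially"
    and f: "f \<in> bfs \<rho>"
  shows "(\<lambda>n. bfs_norm \<rho> (K (\<lambda>y. f y / expo (h n) y))) \<longlonglongrightarrow> 0"
proof -
  define u where "u n = (\<lambda>y. f y / expo (h n) y)" for n
  have fm: "f \<in> borel_measurable lebesgue" by (rule bfs_meas[OF f])
  have u_eq: "u n = (\<lambda>y. f y * expo (- h n) y)" for n unfolding u_def by (simp add: div_expo)
  have ub: "u n \<in> bfs \<rho> \<and> bfs_norm \<rho> (u n) \<le> bfs_norm \<rho> f" for n
  proof -
    have m: "u n \<in> borel_measurable lebesgue" unfolding u_eq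
      by (intro borel_measurable_times fm expo_leb)
    have "cmod (u n x) \<le> 1 * cmod (f x)" for x by (simp add: u_def norm_divide)
    then show ?thesis using bfs_scale_le[OF f m, of 1] by simp
  qed
  define a where "a n = bfs_norm \<rho> (K (u n))" for n
  have "a \<longlonglongrightarrow> 0"
  proof (rule ccontr)
    assume nl: "\<not> a \<longlonglongrightarrow> 0"
    obtain e0 where e0: "e0 > 0" and inf: "\<And>M. \<exists>n\<ge>M. e0 \<le> a n"
    proof -
      from nl obtain r where r: "r > 0" and nr: "\<not> (\<exists>no. \<forall>n\<ge>no. norm (a n - 0) < r)"
        unfolding LIMSEQ_iff by blast
      have "\<exists>n\<ge>M. r \<le> a n" for M
      proof -
        from nr obtain n where "n \<ge> M" "\<not> norm (a n - 0) < r" by blast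
        moreover have "0 \<le> a n" unfolding a_def by (rule bfs_norm_nonneg)
        ultimately show ?thesis by auto
      qed
      then show ?thesis using that r by blast
    qed
    have "infinite {n. e0 \<le> a n}" using inf by (simp add: infinite_nat_iff_unbounded_le)
    from infinite_enumerate[OF this] obtain s :: "nat \<Rightarrow> nat" where sP: "strict_mono s \<and> (\<forall>n. s n \<in> {n. e0 \<le> a n})"
      by (elim exE)
    then have s: "strict_mono s" and s2: "\<forall>n. s n \<in> {n. e0 \<le> a n}" by simp_all
    have ubs: "\<And>n. u (s n) \<in> bfs \<rho>" "\<And>n. bfs_norm \<rho> (u (s n)) \<le> bfs_norm \<rho> f" using ub by simp_all
    obtain r g where r: "strict_mono r" and g: "g \<in> bfs \<rho>"
      and lim: "(\<lambda>n. bfs_norm \<rho> (\<lambda>x. K (u (s (r n))) x - g x)) \<longlonglongrightarrow> 0"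
      using K_cpt[where u="\<lambda>n. u (s n)" and B="bfs_norm \<rho> f", OF ubs(1) ubs(2)]
      by (elim exE conjE) (rule that)
    define q where "q n = s (r n)" for n
    have q: "strict_mono q" unfolding q_def using s(1) r by (simp add: strict_mono_def)
    have aq: "e0 \<le> a (q n)" for n unfolding q_def using s2 by simp
    define k where "k n = h (q n)" for n
    have kinf: "eventually (\<lambda>n. B \<le> \<bar>k n\<bar>) sequentially" for B
    proof -
      have fq: "filterlim q sequentially sequentially" by (rule filterlim_subseq[OF q])
      from hinf show ?thesis
      proof
        assume "filterlim h at_top sequentially"
        then have "filterlim (\<lambda>n. h (q n)) at_top sequentially" by (rule filterlim_compose[OF _ fq])
        then have "eventually (\<lambda>n. B \<le> h (q n)) sequentially" by (simp add: filterlim_at_top)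
        then show ?thesis unfolding k_def by eventually_elim auto
      next
        assume "filterlim h at_bot sequentially"
        then have "filterlim (\<lambda>n. h (q n)) at_bot sequentially" by (rule filterlim_compose[OF _ fq])
        then have "eventually (\<lambda>n. h (q n) \<le> -B) sequentially" by (simp add: filterlim_at_bot)
        then show ?thesis unfolding k_def by eventually_elim auto
      qed
    qed
    define eps where "eps = e0 / 8"
    have eps: "eps > 0" using e0 by (simp add: eps_def)
    obtain M where M: "\<And>n. n \<ge> M \<Longrightarrow> bfs_norm \<rho> (\<lambda>x. K (u (q n)) x - g x) < eps"
      using lim[THEN order_tendstoD(2), OF eps] by (auto simp: eventually_sequentially q_def)
    obtain C where C0: "C \<ge> 0" and Cb0: "\<forall>v\<in>bfs \<rho>. \<forall>s>0. bfs_norm \<rho> v \<le> s \<longrightarrow> bfs_norm \<rho> (K v) \<le> C * s"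
      using K_bound by (elim exE conjE) (rule that)
    have Cb: "bfs_norm \<rho> (K v) \<le> C * s" if "v \<in> bfs \<rho>" "s > 0" "bfs_norm \<rho> v \<le> s" for v s
      using Cb0 that by simp
    define del where "del = eps / (C + 1)"
    have del: "del > 0" using eps C0 by (simp add: del_def)
    have Cdel: "C * del \<le> eps"
    proof -
      have "C * del \<le> (C + 1) * del" using del by simp
      also have "\<dots> = eps" using C0 by (simp add: del_def)
      finally show ?thesis .
    qed
    define T where "T m = {x::real. real m < \<bar>x\<bar>}" for m :: nat
    have Ts: "T m \<in> sets lebesgue" for m
    proof -
      have "T m \<in> sets borel" unfolding T_def by measurable
      then show ?thesis by (simp add: sets_completionI_sets)
    qed
    have Td: "T (Suc m) \<subseteq> T m" for m unfolding T_def by auto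
    have Te: "(\<Inter>m. T m) = {}"
    proof (rule equals0I)
      fix x assume "x \<in> (\<Inter>m. T m)"
      then have "real (nat \<lceil>\<bar>x\<bar>\<rceil>) < \<bar>x\<bar>" unfolding T_def by blast
      moreover have "\<bar>x\<bar> \<le> real (nat \<lceil>\<bar>x\<bar>\<rceil>)" by (rule real_nat_ceiling_ge)
      ultimately show False by linarith
    qed
    have del3: "del / 3 > 0" using del by simp
    obtain R0 where R0: "bfs_norm \<rho> (\<lambda>x. f x * indicator (T R0) x) < del / 3"
    proof -
      have "emeasure lebesgue (\<Inter>m. T m) = 0" using Te by simp
      from ac[where B=T and f=f, OF sep f Ts Td this del3] show ?thesis using that by blast
    qed
    define R where "R = real R0"
    have R: "0 \<le> R" by (simp add: R_def)
    obtain eta where eta: "eta > 0" and uacp: "\<And>A. A \<in> sets lebesgue \<Longrightarrow> emeasure lebesgue A < ennreal eta \<Longrightarrow>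
        bfs_norm \<rho> (\<lambda>x. f x * indicator A x) < del / 3"
    proof -
      obtain eta where "eta > 0" and H: "\<forall>A\<in>sets lebesgue. emeasure lebesgue A < ennreal eta \<longrightarrow>
            bfs_norm \<rho> (\<lambda>x. f x * indicator A x) < del / 3"
        using uac[OF sep f del3] by (elim exE conjE) (rule that)
      show ?thesis by (rule that[OF \<open>eta > 0\<close>]) (use H in simp)
    qed
    define t where "t = del / (3 * (bfs_norm \<rho> f + 1))"
    have nf0: "0 \<le> bfs_norm \<rho> f" by (rule bfs_norm_nonneg)
    have t: "t > 0" using del nf0 by (simp add: t_def)
    have tf: "t * bfs_norm \<rho> f < del / 3"
    proof -
      have "t * bfs_norm \<rho> f = (del / 3) * (bfs_norm \<rho> f / (bfs_norm \<rho> f + 1))"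
        using nf0 by (simp add: t_def field_simps)
      also have "\<dots> < (del / 3) * 1"
        using nf0 del by (intro mult_strict_left_mono) auto
      finally show ?thesis by simp
    qed
    define D where "D = 4 / (eta * t^2)"
    have D: "D > 0" using eta t by (simp add: D_def)
    define Nn where "Nn = nat \<lceil>4 * R / (eta * t^2)\<rceil> + 1"
    have Nn: "Nn > 0" by (simp add: Nn_def)
    have small: "(2*R/Nn + 2/D) / t^2 < eta"
    proof -
      have et: "eta * t^2 > 0" using eta t by simp
      have "4 * R / (eta * t^2) < real Nn"
        unfolding Nn_def using real_nat_ceiling_ge[of "4 * R / (eta * t^2)"] by linarith
      then have "4 * R < real Nn * (eta * t^2)" using et by (simp add: divide_less_eq)
      then have "2 * R / real Nn < eta * t^2 / 2" using Nn by (simp add: field_simps)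
      moreover have "2 / D = eta * t^2 / 2" using et by (simp add: D_def field_simps)
      ultimately have "2*R/Nn + 2/D < eta * t^2" by simp
      then show ?thesis using t by (simp add: divide_less_eq mult.commute)
    qed
    have "\<exists>m. n \<le> m \<and> \<bar>k n\<bar> + D \<le> \<bar>k m\<bar>" for n
    proof -
      have "eventually (\<lambda>m. n \<le> m \<and> \<bar>k n\<bar> + D \<le> \<bar>k m\<bar>) sequentially"
        using kinf[of "\<bar>k n\<bar> + D"] eventually_ge_at_top[of n] by eventually_elim auto
      then obtain N0 where "\<forall>m\<ge>N0. n \<le> m \<and> \<bar>k n\<bar> + D \<le> \<bar>k m\<bar>"
        unfolding eventually_sequentially by (elim exE) (rule that)
      then show ?thesis by auto
    qed
    then have "\<forall>n. \<exists>m. n \<le> m \<and> \<bar>k n\<bar> + D \<le> \<bar>k m\<bar>" by (rule allI)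
    then have "\<exists>nxt. \<forall>n. n \<le> nxt n \<and> \<bar>k n\<bar> + D \<le> \<bar>k (nxt n)\<bar>" by (rule choice)
    then obtain nxt where nxt0: "\<forall>n. n \<le> nxt n \<and> \<bar>k n\<bar> + D \<le> \<bar>k (nxt n)\<bar>" by (elim exE)
    have nxt: "\<And>n. n \<le> nxt n" "\<And>n. \<bar>k n\<bar> + D \<le> \<bar>k (nxt n)\<bar>" using nxt0 by auto
    define p where "p i = (nxt ^^ i) M" for i
    have pS: "p (Suc i) = nxt (p i)" for i by (simp add: p_def)
    have pM: "M \<le> p i" for i
    proof (induction i)
      case 0 then show ?case by (simp add: p_def)
    next
      case (Suc i) then show ?case using nxt(1)[of "p i"] pS[of i] by linarith
    qed
    have pinc: "\<bar>k (p i)\<bar> + D \<le> \<bar>k (p j)\<bar>" if "i < j" for i j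
      using that
    proof (induction j)
      case 0 then show ?case by simp
    next
      case (Suc j)
      show ?case
      proof (cases "i = j")
        case True then show ?thesis using nxt(2)[of "p j"] pS[of j] by simp
      next
        case False
        then have "\<bar>k (p i)\<bar> + D \<le> \<bar>k (p j)\<bar>" using Suc by simp
        also have "\<dots> \<le> \<bar>k (p (Suc j))\<bar>" using nxt(2)[of "p j"] pS[of j] D by simp
        finally show ?thesis .
      qed
    qed
    define c where "c i = - k (p i)" for i
    have csep: "D \<le> \<bar>c i - c j\<bar>" if "i < Nn" "j < Nn" "i \<noteq> j" for i j
    proof (cases "i < j")
      case True then show ?thesis using pinc[of i j] by (simp add: c_def)
    next
      case False then have "j < i" using that by simp
      then show ?thesis using pinc[of j i] by (simp add: c_def)
    qed
    define phi where "phi y = (\<Sum>i<Nn. expo (c i) y) / of_nat Nn" for y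
    have phi1: "cmod (phi y) \<le> 1" for y
    proof -
      have "cmod (\<Sum>i<Nn. expo (c i) y) \<le> (\<Sum>i<Nn. cmod (expo (c i) y))" by (rule norm_sum)
      also have "\<dots> = real Nn" by simp
      finally show ?thesis using Nn by (simp add: phi_def norm_divide)
    qed
    define v where "v i = (\<lambda>y. complex_of_real (1 / real Nn) * u (q (p i)) y)" for i
    have vb: "v i \<in> bfs \<rho>" for i unfolding v_def by (rule bfs_scale) (use ub in blast)
    define w where "w = (\<lambda>y. \<Sum>i<Nn. v i y)"
    have wb: "w \<in> bfs \<rho>" unfolding w_def using bfs_sum_le[of "{..<Nn}" v] vb by blast
    have w_eq: "w y = f y * phi y" for y
    proof -
      have "w y = (\<Sum>i<Nn. complex_of_real (1 / real Nn) * (f y * expo (c i) y))"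
        unfolding w_def v_def u_eq c_def k_def by simp
      also have "\<dots> = f y * ((\<Sum>i<Nn. expo (c i) y) / of_nat Nn)"
        by (simp add: sum_divide_distrib sum_distrib_left)
      finally show ?thesis by (simp add: phi_def)
    qed
    have Kw: "K w = (\<lambda>x. \<Sum>i<Nn. complex_of_real (1 / real Nn) * K (u (q (p i))) x)"
    proof -
      have "K w = (\<lambda>x. \<Sum>i<Nn. K (v i) x)" unfolding w_def by (rule K_sum) (auto simp: vb)
      also have "\<dots> = (\<lambda>x. \<Sum>i<Nn. complex_of_real (1 / real Nn) * K (u (q (p i))) x)"
      proof -
        have "K (v i) = (\<lambda>x. complex_of_real (1 / real Nn) * K (u (q (p i))) x)" for i
          unfolding v_def by (rule K_scale) (use ub in blast)
        then show ?thesis by (simp only:)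
      qed
      finally show ?thesis .
    qed
    define z where "z i = (\<lambda>x. complex_of_real (1 / real Nn) * (K (u (q (p i))) x - g x))" for i
    have zb: "z i \<in> bfs \<rho>" for i unfolding z_def
      by (intro bfs_scale bfs_diff K_bfs g) (use ub in blast)
    have zn: "bfs_norm \<rho> (z i) \<le> (1 / real Nn) * eps" for i
    proof -
      have d: "(\<lambda>x. K (u (q (p i))) x - g x) \<in> bfs \<rho>" by (intro bfs_diff K_bfs g) (use ub in blast)
      have "bfs_norm \<rho> (z i) \<le> (1 / real Nn) * bfs_norm \<rho> (\<lambda>x. K (u (q (p i))) x - g x)"
      proof (rule bfs_scale_le(2)[OF d])
        show "z i \<in> borel_measurable lebesgue" using zb[of i] by (rule bfs_meas)
        show "cmod (z i x) \<le> (1 / real Nn) * cmod (K (u (q (p i))) x - g x)" for x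
          by (simp add: z_def norm_mult norm_divide)
      qed simp
      also have "\<dots> \<le> (1 / real Nn) * eps"
        using M[OF pM[of i]] by (intro mult_left_mono) auto
      finally show ?thesis .
    qed
    have Kwg_eq: "(\<lambda>x. K w x - g x) = (\<lambda>x. \<Sum>i<Nn. z i x)"
    proof
      fix x
      have "(\<Sum>i<Nn. z i x) = (\<Sum>i<Nn. complex_of_real (1 / real Nn) * K (u (q (p i))) x)
           - (\<Sum>i<Nn. complex_of_real (1 / real Nn) * g x)"
        unfolding z_def by (simp add: sum_subtractf right_diff_distrib)
      also have "(\<Sum>i<Nn. complex_of_real (1 / real Nn) * g x) = g x" using Nn by simp
      finally show "K w x - g x = (\<Sum>i<Nn. z i x)" unfolding Kw by simp
    qed
    have Kwg: "bfs_norm \<rho> (\<lambda>x. K w x - g x) \<le> eps"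
    proof -
      have "bfs_norm \<rho> (\<lambda>x. K w x - g x) \<le> (\<Sum>i<Nn. bfs_norm \<rho> (z i))"
        unfolding Kwg_eq using bfs_sum_le[of "{..<Nn}" z] zb by blast
      also have "\<dots> \<le> (\<Sum>i<Nn. (1 / real Nn) * eps)" by (intro sum_mono zn)
      also have "\<dots> = eps" using Nn by simp
      finally show ?thesis .
    qed
    define A where "A = {x \<in> {-R..R}. t \<le> cmod (phi x)}"
    have As: "A \<in> sets lebesgue"
    proof -
      have "A \<in> sets borel" unfolding A_def phi_def by measurable
      then show ?thesis by (simp add: sets_completionI_sets)
    qed
    have "emeasure lebesgue A \<le> ennreal ((2*R/Nn + 2/D) / t^2)"
      unfolding A_def phi_def by (rule avg_measure[OF Nn R D t csep])
    also have "\<dots> < ennreal eta" using small eta by (simp add: ennreal_lessI)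
    finally have fA: "bfs_norm \<rho> (\<lambda>x. f x * indicator A x) < del / 3" by (rule uacp[OF As])
    have TA: "T R0 \<union> A \<in> sets lebesgue" using Ts As by auto
    have fTA: "bfs_norm \<rho> (\<lambda>x. f x * indicator (T R0 \<union> A) x) < 2 * del / 3"
    proof -
      have "bfs_norm \<rho> (\<lambda>x. f x * indicator (T R0 \<union> A) x) \<le>
          bfs_norm \<rho> (\<lambda>x. f x * indicator (T R0) x) + bfs_norm \<rho> (\<lambda>x. f x * indicator A x)"
      proof (rule bfs_add_le(2)[OF bfs_ind[OF f Ts] bfs_ind[OF f As]])
        show "(\<lambda>x. f x * indicator (T R0 \<union> A) x) \<in> borel_measurable lebesgue"
          using bfs_ind[OF f TA] by (rule bfs_meas)
        show "cmod (f x * indicator (T R0 \<union> A) x) \<le> cmod (f x * indicator (T R0) x) + cmod (f x * indicator A x)" for x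
          by (auto simp: indicator_def)
      qed
      then show ?thesis using R0 fA by simp
    qed
    have tfb: "(\<lambda>x. complex_of_real t * f x) \<in> bfs \<rho>" by (rule bfs_scale[OF f])
    have tfn: "bfs_norm \<rho> (\<lambda>x. complex_of_real t * f x) \<le> t * bfs_norm \<rho> f"
      by (rule bfs_scale_le(2)[OF f]) (use t tfb in \<open>auto simp: norm_mult intro: bfs_meas\<close>)
    have wn: "bfs_norm \<rho> w \<le> del"
    proof -
      have "bfs_norm \<rho> w \<le> bfs_norm \<rho> (\<lambda>x. f x * indicator (T R0 \<union> A) x) + bfs_norm \<rho> (\<lambda>x. complex_of_real t * f x)"
      proof (rule bfs_add_le(2)[OF bfs_ind[OF f TA] tfb])
        show "w \<in> borel_measurable lebesgue" using wb by (rule bfs_meas)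
        show "cmod (w x) \<le> cmod (f x * indicator (T R0 \<union> A) x) + cmod (complex_of_real t * f x)" for x
        proof (cases "x \<in> T R0 \<union> A")
          case True
          have "cmod (w x) = cmod (f x) * cmod (phi x)" by (simp add: w_eq norm_mult)
          also have "\<dots> \<le> cmod (f x)" using phi1[of x] by (simp add: mult_left_le)
          finally have wf: "cmod (w x) \<le> cmod (f x)" .
          have e1: "cmod (f x * indicator (T R0 \<union> A) x) = cmod (f x)" using True by simp
          have e2: "cmod (complex_of_real t * f x) = t * cmod (f x)" using t by (simp add: norm_mult)
          have "0 \<le> t * cmod (f x)" using t by simp
          then show ?thesis using wf e1 e2 by linarith
        next
          case False
          then have "\<bar>x\<bar> \<le> R" unfolding T_def R_def by auto
          then have "x \<in> {-R..R}" by auto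
          with False have "cmod (phi x) < t" unfolding A_def by auto
          have "cmod (w x) = cmod (f x) * cmod (phi x)" by (simp add: w_eq norm_mult)
          also have "\<dots> \<le> cmod (f x) * t" using \<open>cmod (phi x) < t\<close> by (intro mult_left_mono) auto
          finally have wf: "cmod (w x) \<le> cmod (f x) * t" .
          have e2: "cmod (complex_of_real t * f x) = t * cmod (f x)" using t by (simp add: norm_mult)
          have "0 \<le> cmod (f x * indicator (T R0 \<union> A) x)" by simp
          moreover have "cmod (w x) \<le> t * cmod (f x)" using wf by (simp add: mult.commute)
          ultimately show ?thesis using e2 by linarith
        qed
      qed
      also have "\<dots> < del" using fTA tfn tf by linarith
      finally show ?thesis by simp
    qed
    have Kwn: "bfs_norm \<rho> (K w) \<le> eps" using Cb[OF wb del wn] Cdel by linarith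
    have gn: "bfs_norm \<rho> g \<le> 2 * eps"
    proof -
      have "bfs_norm \<rho> g \<le> bfs_norm \<rho> (\<lambda>x. g x - K w x) + bfs_norm \<rho> (K w)"
        by (rule bfs_le_sum2[OF g K_bfs[OF wb]])
      also have "bfs_norm \<rho> (\<lambda>x. g x - K w x) = bfs_norm \<rho> (\<lambda>x. K w x - g x)" by (rule bfs_norm_sym)
      finally show ?thesis using Kwg Kwn by linarith
    qed
    have "e0 \<le> a (q M)" by (rule aq)
    also have "a (q M) \<le> bfs_norm \<rho> (\<lambda>x. K (u (q M)) x - g x) + bfs_norm \<rho> g"
      unfolding a_def by (rule bfs_le_sum2[OF K_bfs g]) (use ub in blast)
    also have "\<dots> < eps + 2 * eps" using M[of M] gn by simp
    finally show False using e0 by (simp add: eps_def)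
  qed
  then show ?thesis unfolding a_def u_def .
qed

end

theorem lemma3p2:
  fixes \<rho> :: "(real \<Rightarrow> real) \<Rightarrow> ennreal"
    and K :: "(real \<Rightarrow> complex) \<Rightarrow> (real \<Rightarrow> complex)"
    and h :: "nat \<Rightarrow> real"
  assumes "banach_function_norm \<rho>"
    and "bfs_separable \<rho>"
    and "bfs_compact_operator \<rho> K"
    and "filterlim h at_top sequentially \<or> filterlim h at_bot sequentially"
    and "f \<in> bfs \<rho>"
  shows "(\<lambda>n. bfs_norm \<rho> (\<lambda>x. expo (h n) x * K (\<lambda>y. f y / expo (h n) y) x))
           \<longlonglongrightarrow> 0"
proof -
  interpret bfsK \<rho> K using assms(1-3) by (simp add: bfsK_def bfn_def bfsK_axioms_def)
  have eq: "bfs_norm \<rho> (\<lambda>x. expo (h n) x * K (\<lambda>y. f y / expo (h n) y) x)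
      = bfs_norm \<rho> (K (\<lambda>y. f y / expo (h n) y))" for n
    by (simp add: bfs_norm_def norm_mult)
  show ?thesis unfolding eq by (rule main[OF assms(4) assms(5)])
qed

end
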